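(* For every vertex $t\in\mathbb T_n$ of the $(\mathbf r,\mathbf z)$-seed pattern described in the context, $G_tB_t=B_{t_0}C_t$.
   Context: $n\ge1$, $[b]_+=\max(b,0)$. $\mathbb T_n$ is the $n$-regular tree with edges labeled $1,\dots,n$, distinct labels at each vertex; $t\overset{k}{-}t'$ denotes an edge labeled $k$; $t_0$ is a root vertex. Fix positive integers $r_1,\dots,r_n$ and a skew-symmetrizable integer $n\times n$ matrix $B$. Assign integer $n\times n$ matrices $B_t=(b_{ij;t})$, $C_t=(c_{ij;t})$ and $G_t$ (with columns $\mathbf g_{i;t}$) to each $t\in\mathbb T_n$ by $B_{t_0}=B$, $C_{t_0}=G_{t_0}=I_n$, and for $t\overset{k}{-}t'$, with $\varepsilon\in\{\pm1\}$ (the results are independent of $\varepsilon$): $b_{ij;t'}=-b_{ij;t}$ if $i=k$ or $j=k$, else $b_{ij;t'}=b_{ij;t}+r_k([-\varepsilon b_{ik;t}]_+b_{kj;t}+b_{ik;t}[\varepsilon b_{kj;t}]_+)$; $c_{ij;t'}=-c_{ij;t}$ if $j=k$, else $c_{ij;t'}=c_{ij;t}+r_k(c_{ik;t}[\varepsilon b_{kj;t}]_++[-\varepsilon c_{ik;t}]_+b_{kj;t})$; $\mathbf g_{i;t'}=\mathbf g_{i;t}$ for $i\ne k$ and $\mathbf g_{k;t'}=-\mathbf g_{k;t}+r_k\big(\sum_{j=1}^n[-\varepsilon b_{jk;t}]_+\mathbf g_{j;t}-\sum_{j=1}^n[-\varepsilon c_{jk;t}]_+\mathbf b_j\big)$ with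 $\mathbf b_j$ the $j$-th column of $B$. ($B_t$ is the exchange matrix at $t$ of the generalized $(\mathbf r,\mathbf z)$-seed pattern with initial exchange matrix $B$, and $C_t,G_t$ are its $C$- and $G$-matrices.) *)

theory Defs
  imports Main
begin

(* n x n integer matrices are functions nat => nat => int; only entries with
   indices < n are meaningful. Labels 1..n of the paper are 0..n-1 here. *)

type_synonym imat = "nat \<Rightarrow> nat \<Rightarrow> int"

definition pos :: "int \<Rightarrow> int" where
  "pos b = max b 0"

definition idm :: imat where
  "idm = (\<lambda>i j. if i = j then 1 else 0)"

definition matmul :: "nat \<Rightarrow> imat \<Rightarrow> imat \<Rightarrow> imat" where
  "matmul n X Y = (\<lambda>i j. \<Sum>l<n. X i l * Y l j)"

definition skew_symmetrizable :: "nat \<Rightarrow> imat \<Rightarrow> bool" where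
  "skew_symmetrizable n B \<longleftrightarrow>
     (\<exists>d::nat \<Rightarrow> int. (\<forall>i<n. d i > 0) \<and>
        (\<forall>i<n. \<forall>j<n. d i * B i j = - (d j * B j i)))"

definition mutB :: "(nat \<Rightarrow> int) \<Rightarrow> nat \<Rightarrow> int \<Rightarrow> imat \<Rightarrow> imat" where
  "mutB r k e B = (\<lambda>i j. if i = k \<or> j = k then - B i j
      else B i j + r k * (pos (- e * B i k) * B k j + B i k * pos (e * B k j)))"

definition mutC :: "(nat \<Rightarrow> int) \<Rightarrow> nat \<Rightarrow> int \<Rightarrow> imat \<Rightarrow> imat \<Rightarrow> imat" where
  "mutC r k e B C = (\<lambda>i j. if j = k then - C i j
      else C i j + r k * (C i k * pos (e * B k j) + pos (- e * C i k) * B k j))"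

(* mutation of the G-matrix (columns g_j); B0 is the initial exchange matrix *)
definition mutG :: "nat \<Rightarrow> (nat \<Rightarrow> int) \<Rightarrow> imat \<Rightarrow> nat \<Rightarrow> int \<Rightarrow> imat \<Rightarrow> imat \<Rightarrow> imat \<Rightarrow> imat" where
  "mutG n r B0 k e B C G = (\<lambda>i j. if j \<noteq> k then G i j
      else - G i k + r k * ((\<Sum>l<n. pos (- e * B l k) * G i l)
                            - (\<Sum>l<n. pos (- e * C l k) * B0 i l)))"

definition mut_seed :: "nat \<Rightarrow> (nat \<Rightarrow> int) \<Rightarrow> imat \<Rightarrow> imat \<times> imat \<times> imat \<Rightarrow> nat \<times> int
     \<Rightarrow> imat \<times> imat \<times> imat" where
  "mut_seed n r B0 S ke = (case S of (B, C, G) \<Rightarrow> (case ke of (k, e) \<Rightarrow>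
      (mutB r k e B, mutC r k e B C, mutG n r B0 k e B C G)))"

(* (B_t, C_t, G_t) at the vertex t reached from t0 along the path with edge labels
   k_1, k_2, ... (first step first), using sign e_i at step i *)
definition seed_at :: "nat \<Rightarrow> (nat \<Rightarrow> int) \<Rightarrow> imat \<Rightarrow> (nat \<times> int) list \<Rightarrow> imat \<times> imat \<times> imat" where
  "seed_at n r B0 ks = foldl (mut_seed n r B0) (B0, idm, idm) ks"

end

theory Submission
  imports Defs
begin

lemma pos_mult: "(0::int) < d \<Longrightarrow> d * pos x = pos (d * x)"
  unfolding pos_def by (simp add: max_def mult_le_0_iff zero_le_mult_iff)

definition skw :: "nat \<Rightarrow> (nat \<Rightarrow> int) \<Rightarrow> imat \<Rightarrow> bool" where
  "skw n d B \<longleftrightarrow> (\<forall>i<n. \<forall>j<n. d i * B i j = - (d j * B j i))"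

lemma skw_diag:
  assumes "skw n d B" "\<forall>i<n. d i > 0" "i < n" shows "B i i = 0"
proof -
  have "d i * B i i = - (d i * B i i)" using assms unfolding skw_def by blast
  hence "d i * B i i = 0" by linarith
  thus ?thesis using assms(2,3) by fastforce
qed

lemma skw_mut:
  assumes sk: "skw n d B" and dp: "\<forall>i<n. d i > 0" and k: "k < n"
  shows "skw n d (mutB r k e B)"
  unfolding skw_def
proof (intro allI impI)
  fix i j assume i: "i < n" and j: "j < n"
  show "d i * mutB r k e B i j = - (d j * mutB r k e B j i)"
  proof (cases "i = k \<or> j = k")
    case True
    have "d i * B i j = - (d j * B j i)" using sk i j unfolding skw_def by blast
    moreover have "mutB r k e B i j = - B i j" "mutB r k e B j i = - B j i"
      using True unfolding mutB_def by auto
    ultimately show ?thesis by simp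
  next
    case False
    have a: "d i * B i k = - (d k * B k i)" using sk i k unfolding skw_def by blast
    have b: "d k * B k j = - (d j * B j k)" using sk j k unfolding skw_def by blast
    have c: "d i * B i j = - (d j * B j i)" using sk i j unfolding skw_def by blast
    have dpi: "d i > 0" "d j > 0" "d k > 0" using dp i j k by auto
    have t1: "d i * (pos (- e * B i k) * B k j) = - (pos (e * B k i) * (d j * B j k))"
    proof -
      have "d i * pos (- e * B i k) = pos (- e * (d i * B i k))"
        using pos_mult[OF dpi(1), of "- e * B i k"] by (simp add: mult.left_commute)
      also have "\<dots> = pos (e * (d k * B k i))" using a by simp
      also have "\<dots> = d k * pos (e * B k i)"
        using pos_mult[OF dpi(3), of "e * B k i"] by (simp add: mult.left_commute)
      finally have "d i * pos (- e * B i k) = d k * pos (e * B k i)" .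
      have "d i * (pos (- e * B i k) * B k j) = (d i * pos (- e * B i k)) * B k j"
        by (simp only: mult.assoc)
      also have "\<dots> = (d k * pos (e * B k i)) * B k j" by (simp only: \<open>d i * pos (- e * B i k) = d k * pos (e * B k i)\<close>)
      also have "\<dots> = pos (e * B k i) * (d k * B k j)" by (simp only: ac_simps)
      also have "\<dots> = - (pos (e * B k i) * (d j * B j k))" by (simp only: b)
      finally show ?thesis .
    qed
    have t2: "d i * (B i k * pos (e * B k j)) = - (B k i * (d j * pos (- e * B j k)))"
    proof -
      have "d j * pos (- e * B j k) = pos (- e * (d j * B j k))"
        using pos_mult[OF dpi(2), of "- e * B j k"] by (simp add: mult.left_commute)
      also have "\<dots> = pos (e * (d k * B k j))" using b by simp
      also have "\<dots> = d k * pos (e * B k j)"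
        using pos_mult[OF dpi(3), of "e * B k j"] by (simp add: mult.left_commute)
      finally have e1: "d j * pos (- e * B j k) = d k * pos (e * B k j)" .
      have "d i * (B i k * pos (e * B k j)) = (d i * B i k) * pos (e * B k j)" by simp
      also have "\<dots> = - (B k i * (d k * pos (e * B k j)))" using a by simp
      finally show ?thesis using e1 by simp
    qed
    have "d i * mutB r k e B i j = d i * B i j + r k * (d i * (pos (- e * B i k) * B k j)
         + d i * (B i k * pos (e * B k j)))"
      using False unfolding mutB_def by (simp add: algebra_simps)
    also have "\<dots> = - (d j * B j i + r k * (d j * (pos (- e * B j k) * B k i)
         + d j * (B j k * pos (e * B k i))))"
      unfolding t1 t2 c by (simp add: algebra_simps)
    also have "\<dots> = - (d j * mutB r k e B j i)"
      using False unfolding mutB_def by (simp add: algebra_simps)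
    finally show ?thesis .
  qed
qed

lemma step:
  assumes k: "k < n" and bkk: "B k k = 0"
    and H: "\<forall>i<n. \<forall>j<n. matmul n G B i j = matmul n B0 C i j"
    and i: "i < n" and j: "j < n"
  shows "matmul n (mutG n r B0 k e B C G) (mutB r k e B) i j = matmul n B0 (mutC r k e B C) i j"
proof (cases "j = k")
  case True
  have "matmul n (mutG n r B0 k e B C G) (mutB r k e B) i j = (\<Sum>l<n. - (G i l * B l k))"
    unfolding matmul_def
    by (rule sum.cong) (auto simp: mutB_def mutG_def True bkk)
  also have "\<dots> = - matmul n G B i k" unfolding matmul_def by (simp add: sum_negf)
  also have "\<dots> = - matmul n B0 C i k" using H i k by simp
  also have "\<dots> = matmul n B0 (mutC r k e B C) i j"
    unfolding matmul_def mutC_def using True by (simp add: sum_negf)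
  finally show ?thesis .
next
  case False
  define P where "P = (\<Sum>l<n. pos (- e * B l k) * G i l)"
  define Q where "Q = (\<Sum>l<n. pos (- e * C l k) * B0 i l)"
  define f where "f l = G i l * B l j + r k * B k j * (pos (- e * B l k) * G i l)
       + r k * pos (e * B k j) * (G i l * B l k)" for l
  define X where "X = - r k * B k j * P + r k * B k j * Q"
  have "matmul n (mutG n r B0 k e B C G) (mutB r k e B) i j
      = (\<Sum>l<n. f l + (if l = k then X else 0))"
    unfolding matmul_def
  proof (rule sum.cong)
    fix l assume "l \<in> {..<n}"
    show "mutG n r B0 k e B C G i l * mutB r k e B l j = f l + (if l = k then X else 0)"
    proof (cases "l = k")
      case True
      then show ?thesis unfolding mutG_def mutB_def f_def X_def P_def[symmetric] Q_def[symmetric]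
        using False bkk by (simp add: pos_def algebra_simps)
    next
      case lk: False
      then show ?thesis unfolding mutG_def mutB_def f_def using False
        by (simp add: algebra_simps)
    qed
  qed simp
  also have "\<dots> = (\<Sum>l<n. f l) + X" using k by (simp add: sum.distrib)
  also have "(\<Sum>l<n. f l) = matmul n G B i j + r k * B k j * P + r k * pos (e * B k j) * matmul n G B i k"
    unfolding f_def matmul_def P_def by (simp add: sum.distrib sum_distrib_left)
  also have "\<dots> + X = matmul n B0 C i j + r k * pos (e * B k j) * matmul n B0 C i k + r k * B k j * Q"
    using H i j k unfolding X_def by simp
  also have "\<dots> = matmul n B0 (mutC r k e B C) i j"
    unfolding matmul_def mutC_def Q_def using False
    by (simp add: sum.distrib sum_distrib_left algebra_simps)
  finally show ?thesis .
qed

lemma main: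
  assumes dp: "\<forall>i<n. d i > 0" and sk: "skw n d B"
    and ks: "\<forall>(k, e) \<in> set ks. k < n"
  shows "case seed_at n r B ks of (Bt, Ct, Gt) \<Rightarrow> skw n d Bt \<and>
           (\<forall>i<n. \<forall>j<n. matmul n Gt Bt i j = matmul n B Ct i j)"
  using ks
proof (induction ks rule: rev_induct)
  case Nil
  have "matmul n idm B i j = matmul n B idm i j" if "i < n" "j < n" for i j
  proof -
    have "matmul n idm B i j = (\<Sum>l<n. if l = i then B i j else 0)"
      unfolding matmul_def by (rule sum.cong) (auto simp: idm_def)
    moreover have "matmul n B idm i j = (\<Sum>l<n. if l = j then B i j else 0)"
      unfolding matmul_def by (rule sum.cong) (auto simp: idm_def)
    ultimately show ?thesis using that by simp
  qed
  then show ?case using sk unfolding seed_at_def by simp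
next
  case (snoc x xs)
  obtain k e where x: "x = (k, e)" by force
  have kn: "k < n" using snoc.prems x by auto
  obtain Bt Ct Gt where S: "seed_at n r B xs = (Bt, Ct, Gt)" by (metis prod_cases3)
  have IH: "skw n d Bt" "\<forall>i<n. \<forall>j<n. matmul n Gt Bt i j = matmul n B Ct i j"
    using snoc.IH snoc.prems S by auto
  have e: "seed_at n r B (xs @ [x]) = mut_seed n r B (Bt, Ct, Gt) (k, e)"
    using S x unfolding seed_at_def by simp
  have bkk: "Bt k k = 0" using skw_diag[OF IH(1) dp kn] .
  show ?case unfolding e mut_seed_def
    using skw_mut[OF IH(1) dp kn] step[OF kn bkk IH(2)] by simp
qed

theorem propositionP5:
  fixes n :: nat and r :: "nat \<Rightarrow> int" and B :: imat and ks :: "(nat \<times> int) list"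
  assumes "n \<ge> 1"
    and "\<forall>i<n. r i > 0"
    and "skew_symmetrizable n B"
    and "\<forall>(k, e) \<in> set ks. k < n \<and> (e = 1 \<or> e = -1)"
    and "\<forall>i. Suc i < length ks \<longrightarrow> fst (ks ! i) \<noteq> fst (ks ! Suc i)"
  shows "case seed_at n r B ks of (Bt, Ct, Gt) \<Rightarrow>
           (\<forall>i<n. \<forall>j<n. matmul n Gt Bt i j = matmul n B Ct i j)"
proof -
  obtain d where dp: "\<forall>i<n. d i > 0" and sk: "skw n d B"
    using assms(3) unfolding skew_symmetrizable_def skw_def by blast
  have ks: "\<forall>(k, e) \<in> set ks. k < n" using assms(4) by auto
  show ?thesis using main[OF dp sk ks, of r] by (auto split: prod.splits)
qed

end
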